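(* Let $\mathbb{F}$ be a finite field and $\alpha\in\mathbb{F}$ with $\mathrm{ord}(\alpha)=n$. Let $H\in\mathbb{F}[z]^{(n-1)\times n}$ be the matrix whose entry in row $i$ ($i=1,\ldots,n-1$) and column $j$ ($j=1,\ldots,n$) is $(z-\alpha^{n-j+1})^i$, i.e. \[ H=\begin{pmatrix} z-\alpha^n&z-\alpha^{n-1}&\cdots&z-\alpha\\ (z-\alpha^n)^2&(z-\alpha^{n-1})^2&\cdots&(z-\alpha)^2\\ \vdots&\vdots&&\vdots\\ (z-\alpha^n)^{n-1}&(z-\alpha^{n-1})^{n-1}&\cdots&(z-\alpha)^{n-1} \end{pmatrix}. \] Then (1) $H$ is right invertible, and (2) $GH^{\mathsf T}=0$ where $G=\sum_{\nu=0}^{n-1}z^\nu\begin{pmatrix}1&\alpha^\nu&\alpha^{2\nu}&\ldots&\alpha^{(n-1)\nu}\end{pmatrix}\in\mathbb{F}[z]^{1\times n}$. Consequently, $H$ is a parity check matrix of the convolutional code $\mathcal{C}=\mathrm{im}\,G$, i.e. $\mathcal{C}=\{v\in\mathbb{F}[z]^n\mid vH^{\mathsf T}=0\}$.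
   Context: $\mathrm{ord}(\alpha)$ is the multiplicative order of $\alpha$. A polynomial matrix $M\in\mathbb{F}[z]^{k\times n}$ is right invertible if $M\tilde M=I_k$ for some $\tilde M\in\mathbb{F}[z]^{n\times k}$. For a convolutional code $\mathcal{C}=\mathrm{im}\,G=\{uG\mid u\in\mathbb{F}[z]\}$ with right invertible $G\in\mathbb{F}[z]^{1\times n}$, a parity check matrix is a right invertible $H\in\mathbb{F}[z]^{(n-1)\times n}$ with $\mathcal{C}=\{v\in\mathbb{F}[z]^n\mid vH^{\mathsf T}=0\}$. *)

theory Defs
  imports "HOL-Computational_Algebra.Polynomial" "Jordan_Normal_Form.Matrix"
begin

definition mult_ord :: "'a::field \<Rightarrow> nat" where
  "mult_ord a = (if \<exists>k>0. a ^ k = 1 then (LEAST k. k > 0 \<and> a ^ k = 1) else 0)"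

definition right_invertible :: "'a::comm_ring_1 mat \<Rightarrow> bool" where
  "right_invertible M \<longleftrightarrow> (\<exists>M' \<in> carrier_mat (dim_col M) (dim_row M). M * M' = 1\<^sub>m (dim_row M))"

text \<open>The matrix H: row i (0-based, i < n-1), column j (0-based, j < n) has entry
  (z - alpha^(n-j))^(i+1).\<close>
definition H_mat :: "'a::field \<Rightarrow> nat \<Rightarrow> 'a poly mat" where
  "H_mat \<alpha> n = mat (n - 1) n (\<lambda>(i, j). [:- (\<alpha> ^ (n - j)), 1:] ^ (i + 1))"

definition G_mat :: "'a::field \<Rightarrow> nat \<Rightarrow> 'a poly mat" where
  "G_mat \<alpha> n = mat 1 n (\<lambda>(i, j). \<Sum>\<nu><n. monom (\<alpha> ^ (j * \<nu>)) \<nu>)"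

end

theory Submission
  imports Defs "Jordan_Normal_Form.Determinant"
begin

lemma binom_key:
  fixes B :: "'a::field"
  assumes "k < n"
  shows "(\<Sum>i<n. Polynomial.smult ((-1)^i * of_nat (k choose i)) (monom 1 (k-i)) * [:-B,1:]^i) = [:B^k:]"
proof -
  let ?Z = "[:0,1:] :: 'a poly"
  have "(\<Sum>i<n. Polynomial.smult ((-1)^i * of_nat (k choose i)) (monom 1 (k-i)) * [:-B,1:]^i)
      = (\<Sum>i\<le>k. Polynomial.smult ((-1)^i * of_nat (k choose i)) (monom 1 (k-i)) * [:-B,1:]^i)"
  proof (rule sum.mono_neutral_right)
    show "{..k} \<subseteq> {..<n}" using assms by auto
  qed (auto simp: not_le binomial_eq_0)
  also have "\<dots> = (\<Sum>i\<le>k. of_nat (k choose i) * (- [:-B,1:])^i * ?Z^(k-i))"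
  proof (rule sum.cong[OF refl])
    fix i assume "i \<in> {..k}"
    have m1: "\<And>p::'a poly. (-1)^i * p = Polynomial.smult ((-1)^i) p" by (cases "even i") auto
    have "Polynomial.smult ((-1)^i * of_nat (k choose i)) (monom 1 (k-i)) * [:-B,1:]^i
       = (of_nat (k choose i) * ((-1)^i * [:-B,1:]^i)) * ?Z^(k-i)"
      by (simp add: monom_altdef of_nat_poly mult_ac m1)
    also have "\<dots> = of_nat (k choose i) * (- [:-B,1:])^i * ?Z^(k-i)"
      by (subst power_minus) (simp only: mult.assoc)
    finally show "Polynomial.smult ((-1)^i * of_nat (k choose i)) (monom 1 (k-i)) * [:-B,1:]^i = of_nat (k choose i) * (- [:-B,1:])^i * ?Z^(k-i)" .
  qed
  also have "\<dots> = (- [:-B,1:] + ?Z)^k" by (rule binomial_ring[symmetric])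
  also have "- [:-B,1:] + ?Z = [:B:]" by simp
  also have "[:B:]^k = [:B^k:]" by (simp add: poly_const_pow)
  finally show ?thesis .
qed
lemma left_right_inv:
  fixes A B :: "'b::comm_ring_1 mat"
  assumes A: "A \<in> carrier_mat n n" and B: "B \<in> carrier_mat n n" and BA: "B * A = 1\<^sub>m n"
  shows "A * B = 1\<^sub>m n"
proof -
  have d: "det B * det A = 1" using det_mult[OF B A] BA by simp
  define R where "R = det B \<cdot>\<^sub>m adj_mat A"
  have R: "R \<in> carrier_mat n n" using adj_mat(1)[OF A] by (simp add: R_def)
  have AR: "A * R = 1\<^sub>m n"
    unfolding R_def using mult_smult_distrib[OF A adj_mat(1)[OF A]] adj_mat(2)[OF A] d
    by (auto intro!: eq_matI simp: mult.commute)
  have "B = B * (A * R)" using AR B by simp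
  also have "\<dots> = (B * A) * R" using assoc_mult_mat[OF B A R] by simp
  also have "\<dots> = R" using BA R by simp
  finally show ?thesis using AR by simp
qed

lemma rsum:
  fixes \<alpha> :: "'a::field"
  assumes n: "n > 0" and an: "\<alpha> ^ n = 1" and mn: "\<And>k. 0 < k \<Longrightarrow> k < n \<Longrightarrow> \<alpha> ^ k \<noteq> 1"
  shows "(\<Sum>k<n. (\<alpha> ^ m) ^ k) = (if n dvd m then of_nat n else 0)"
proof (cases "n dvd m")
  case True
  then obtain q where "m = n * q" by auto
  then have "\<alpha> ^ m = 1" by (simp add: power_mult an)
  then show ?thesis using True by simp
next
  case False
  have "\<alpha> ^ m = \<alpha> ^ (m mod n)"
    by (metis an mod_mult_div_eq mult.commute mult_1 power_add power_mult power_one)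
  moreover have "0 < m mod n" "m mod n < n" using False n by (auto simp: dvd_eq_mod_eq_0 gr0I)
  ultimately have ne: "\<alpha> ^ m \<noteq> 1" using mn by auto
  have "1 - (\<alpha> ^ m) ^ n = 0" by (simp add: power_mult[symmetric] mult.commute[of m] power_mult an)
  then have "(1 - \<alpha> ^ m) * (\<Sum>k<n. (\<alpha> ^ m) ^ k) = 0" by (simp add: one_diff_power_eq)
  then show ?thesis using ne False by simp
qed

lemma n_nonzero:
  fixes \<alpha> :: "'a::field"
  assumes n: "n > 0" and an: "\<alpha> ^ n = 1" and mn: "\<And>k. 0 < k \<Longrightarrow> k < n \<Longrightarrow> \<alpha> ^ k \<noteq> 1"
  shows "(of_nat n :: 'a) \<noteq> 0"
proof
  assume z: "(of_nat n :: 'a) = 0"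
  have S: "\<And>m. (\<Sum>j<n. (\<alpha> ^ j) ^ m) = 0"
  proof -
    fix m
    have "(\<Sum>j<n. (\<alpha> ^ j) ^ m) = (\<Sum>j<n. (\<alpha> ^ m) ^ j)" by (simp add: power_mult[symmetric] mult.commute)
    also have "\<dots> = 0" using rsum[OF n an mn, of m] z by simp
    finally show "(\<Sum>j<n. (\<alpha> ^ j) ^ m) = 0" .
  qed
  define Q where "Q = (\<Prod>j\<in>{1..<n}. [:- (\<alpha> ^ j), 1:])"
  have "(\<Sum>j<n. poly Q (\<alpha> ^ j)) = (\<Sum>j<n. \<Sum>i\<le>degree Q. coeff Q i * (\<alpha> ^ j) ^ i)"
    by (simp add: poly_altdef)
  also have "\<dots> = (\<Sum>i\<le>degree Q. coeff Q i * (\<Sum>j<n. (\<alpha> ^ j) ^ i))"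
    by (subst sum.swap) (simp add: sum_distrib_left)
  also have "\<dots> = 0" using S by simp
  finally have s0: "(\<Sum>j<n. poly Q (\<alpha> ^ j)) = 0" .
  have "(\<Sum>j<n. poly Q (\<alpha> ^ j)) = poly Q (\<alpha> ^ 0) + (\<Sum>j\<in>{1..<n}. poly Q (\<alpha> ^ j))"
    using n by (metis (no_types, lifting) atLeast0LessThan sum.atLeast_Suc_lessThan One_nat_def)
  also have "(\<Sum>j\<in>{1..<n}. poly Q (\<alpha> ^ j)) = 0"
    by (rule sum.neutral) (auto simp: Q_def poly_prod)
  finally have "poly Q 1 = 0" using s0 by simp
  then obtain j where "j \<in> {1..<n}" "1 - \<alpha> ^ j = 0" by (auto simp: Q_def poly_prod)
  then show False using mn by auto
qed

lemma smult_sum_right: "Polynomial.smult c (sum f A) = (\<Sum>x\<in>A. Polynomial.smult c (f x))"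
  by (induct A rule: infinite_finite_induct) (auto simp: smult_add_right)

definition Vm :: "'a::field \<Rightarrow> nat \<Rightarrow> 'a poly mat" where
  "Vm \<alpha> n = mat n n (\<lambda>(i, j). [:- (\<alpha> ^ (n - j)), 1:] ^ i)"

definition Vi :: "'a::field \<Rightarrow> nat \<Rightarrow> 'a poly mat" where
  "Vi \<alpha> n = mat n n (\<lambda>(j, i). Polynomial.smult (inverse (of_nat n))
     (\<Sum>k<n. Polynomial.smult (\<alpha> ^ (j * k)) (Polynomial.smult ((-1)^i * of_nat (k choose i)) (monom 1 (k - i)))))"

lemma Vi_Vm:
  fixes \<alpha> :: "'a::field"
  assumes n: "n > 0" and an: "\<alpha> ^ n = 1" and mn: "\<And>k. 0 < k \<Longrightarrow> k < n \<Longrightarrow> \<alpha> ^ k \<noteq> 1"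
  shows "Vi \<alpha> n * Vm \<alpha> n = 1\<^sub>m n"
proof (rule eq_matI)
  fix j l assume j: "j < dim_row (1\<^sub>m n :: 'a poly mat)" and l: "l < dim_col (1\<^sub>m n :: 'a poly mat)"
  then have j: "j < n" and l: "l < n" by auto
  have nz: "(of_nat n :: 'a) \<noteq> 0" by (rule n_nonzero[OF n an mn])
  have "(Vi \<alpha> n * Vm \<alpha> n) $$ (j, l) = (\<Sum>i<n. Vi \<alpha> n $$ (j, i) * Vm \<alpha> n $$ (i, l))"
    using j l by (simp add: Vi_def Vm_def scalar_prod_def atLeast0LessThan)
  also have "\<dots> = Polynomial.smult (inverse (of_nat n)) (\<Sum>k<n. Polynomial.smult (\<alpha> ^ (j * k))
      (\<Sum>i<n. Polynomial.smult ((-1)^i * of_nat (k choose i)) (monom 1 (k - i)) * [:- (\<alpha> ^ (n - l)), 1:] ^ i))"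
    using j l by (simp add: Vi_def Vm_def sum_distrib_right smult_sum_right) (rule sum.swap)
  also have "\<dots> = Polynomial.smult (inverse (of_nat n)) (\<Sum>k<n. Polynomial.smult (\<alpha> ^ (j * k)) [:(\<alpha> ^ (n - l)) ^ k:])"
    by (rule arg_cong[where f="Polynomial.smult (inverse (of_nat n))"], rule sum.cong[OF refl], subst binom_key, auto)
  also have "(\<Sum>k<n. Polynomial.smult (\<alpha> ^ (j * k)) [:(\<alpha> ^ (n - l)) ^ k:]) = [:\<Sum>k<n. (\<alpha> ^ (j + (n - l))) ^ k:]"
  proof -
    have t: "\<And>k. \<alpha> ^ (j * k) * (\<alpha> ^ (n - l)) ^ k = (\<alpha> ^ (j + (n - l))) ^ k"
      by (simp add: power_add power_mult power_mult_distrib)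
    show ?thesis by (simp add: t flip: sum_to_poly)
  qed
  also have "(\<Sum>k<n. (\<alpha> ^ (j + (n - l))) ^ k) = (if n dvd (j + (n - l)) then of_nat n else 0)"
    by (rule rsum[OF n an mn])
  also have "(n dvd (j + (n - l))) = (j = l)"
  proof
    assume d: "n dvd (j + (n - l))"
    have "0 < j + (n - l)" "j + (n - l) < 2 * n" using j l by auto
    from d obtain q where q: "j + (n - l) = n * q" by (auto elim!: dvdE)
    have "q \<noteq> 0" using q \<open>0 < j + (n - l)\<close> by auto
    moreover have "q < 2" using q \<open>j + (n - l) < 2 * n\<close> by (metis mult.commute mult_less_cancel2)
    ultimately have "q = 1" by auto
    then have "j + (n - l) = n" using q by simp
    then show "j = l" using j l by auto
  qed (use l in auto)
  finally show "(Vi \<alpha> n * Vm \<alpha> n) $$ (j, l) = 1\<^sub>m n $$ (j, l)"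
    using j l nz by simp
qed (auto simp: Vi_def Vm_def)

lemma Vm_carrier: "Vm \<alpha> n \<in> carrier_mat n n" by (simp add: Vm_def)
lemma Vi_carrier: "Vi \<alpha> n \<in> carrier_mat n n" by (simp add: Vi_def)

lemma G_Vi:
  fixes \<alpha> :: "'a::field"
  assumes nz: "(of_nat n :: 'a) \<noteq> 0" and j: "j < n"
  shows "G_mat \<alpha> n $$ (0, j) = Polynomial.smult (of_nat n) (Vi \<alpha> n $$ (j, 0))"
  using j nz by (simp add: G_mat_def Vi_def smult_monom)

theorem theorem3p1:
  fixes \<alpha> :: "'a::{field,finite}" and n :: nat
  assumes "mult_ord \<alpha> = n"
  shows "right_invertible (H_mat \<alpha> n) \<and>
         G_mat \<alpha> n * transpose_mat (H_mat \<alpha> n) = 0\<^sub>m 1 (n - 1) \<and>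
         {u \<cdot>\<^sub>m G_mat \<alpha> n | u. True} =
         {v \<in> carrier_mat 1 n. v * transpose_mat (H_mat \<alpha> n) = 0\<^sub>m 1 (n - 1)}"
proof (cases "n = 0")
  case True
  have "right_invertible (H_mat \<alpha> n)"
    unfolding right_invertible_def using True
    by (intro bexI[of _ "0\<^sub>m 0 0"]) (auto simp: H_mat_def intro!: eq_matI)
  moreover have "G_mat \<alpha> n * transpose_mat (H_mat \<alpha> n) = 0\<^sub>m 1 (n - 1)"
    using True by (auto simp: H_mat_def G_mat_def intro!: eq_matI)
  moreover have "{u \<cdot>\<^sub>m G_mat \<alpha> n | u. True} =
         {v \<in> carrier_mat 1 n. v * transpose_mat (H_mat \<alpha> n) = 0\<^sub>m 1 (n - 1)}"
  proof safe
    fix u show "u \<cdot>\<^sub>m G_mat \<alpha> n \<in> carrier_mat 1 n" by (simp add: G_mat_def)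
    show "u \<cdot>\<^sub>m G_mat \<alpha> n * transpose_mat (H_mat \<alpha> n) = 0\<^sub>m 1 (n - 1)"
      using True by (auto simp: H_mat_def G_mat_def intro!: eq_matI)
  next
    fix v :: "'a poly mat" assume "v \<in> carrier_mat 1 n"
    then show "\<exists>u. v = u \<cdot>\<^sub>m G_mat \<alpha> n \<and> True"
      using True by (intro exI[of _ 0]) (auto simp: G_mat_def intro!: eq_matI)
  qed
  ultimately show ?thesis by blast
next
  case False
  then have n: "n > 0" by simp
  have ex: "\<exists>k>0. \<alpha> ^ k = 1" using assms False by (auto simp: mult_ord_def split: if_splits)
  have nL: "n = (LEAST k. k > 0 \<and> \<alpha> ^ k = 1)" using assms ex by (simp add: mult_ord_def)
  have an: "\<alpha> ^ n = 1" using LeastI_ex[OF ex] nL by simp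
  have mn: "\<alpha> ^ k \<noteq> 1" if "0 < k" "k < n" for k
    using not_less_Least[of k "\<lambda>k. k > 0 \<and> \<alpha> ^ k = 1"] that nL by auto
  have nz: "(of_nat n :: 'a) \<noteq> 0" by (rule n_nonzero[OF n an mn])
  have ViVm: "Vi \<alpha> n * Vm \<alpha> n = 1\<^sub>m n" by (rule Vi_Vm[OF n an mn])
  have VmVi: "Vm \<alpha> n * Vi \<alpha> n = 1\<^sub>m n" by (rule left_right_inv[OF Vm_carrier Vi_carrier ViVm])
  have HV: "H_mat \<alpha> n $$ (i, j) = Vm \<alpha> n $$ (Suc i, j)" if "i < n - 1" "j < n" for i j
    using that by (simp add: H_mat_def Vm_def)
  have VmVi_e: "(\<Sum>j<n. Vm \<alpha> n $$ (i, j) * Vi \<alpha> n $$ (j, l)) = (if i = l then 1 else 0)"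
    if "i < n" "l < n" for i l
  proof -
    have "(Vm \<alpha> n * Vi \<alpha> n) $$ (i, l) = (\<Sum>j<n. Vm \<alpha> n $$ (i, j) * Vi \<alpha> n $$ (j, l))"
      using that by (simp add: Vi_def Vm_def scalar_prod_def atLeast0LessThan)
    then show ?thesis using VmVi that by simp
  qed
  have ViVm_e: "(\<Sum>i<n. Vi \<alpha> n $$ (j, i) * Vm \<alpha> n $$ (i, l)) = (if j = l then 1 else 0)"
    if "j < n" "l < n" for j l
  proof -
    have "(Vi \<alpha> n * Vm \<alpha> n) $$ (j, l) = (\<Sum>i<n. Vi \<alpha> n $$ (j, i) * Vm \<alpha> n $$ (i, l))"
      using that by (simp add: Vi_def Vm_def scalar_prod_def atLeast0LessThan)
    then show ?thesis using ViVm that by simp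
  qed
  have RI: "right_invertible (H_mat \<alpha> n)"
    unfolding right_invertible_def
  proof (intro bexI[of _ "mat n (n - 1) (\<lambda>(j, l). Vi \<alpha> n $$ (j, Suc l))"])
    show "H_mat \<alpha> n * mat n (n - 1) (\<lambda>(j, l). Vi \<alpha> n $$ (j, Suc l)) = 1\<^sub>m (dim_row (H_mat \<alpha> n))"
    proof (rule eq_matI)
      fix i l assume "i < dim_row (1\<^sub>m (dim_row (H_mat \<alpha> n)) :: 'a poly mat)"
        "l < dim_col (1\<^sub>m (dim_row (H_mat \<alpha> n)) :: 'a poly mat)"
      then have i: "i < n - 1" and l: "l < n - 1" by (auto simp: H_mat_def)
      have "(H_mat \<alpha> n * mat n (n - 1) (\<lambda>(j, l). Vi \<alpha> n $$ (j, Suc l))) $$ (i, l)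
          = (\<Sum>j<n. Vm \<alpha> n $$ (Suc i, j) * Vi \<alpha> n $$ (j, Suc l))"
        using i l by (auto simp: H_mat_def Vm_def scalar_prod_def atLeast0LessThan intro!: sum.cong)
      also have "\<dots> = (if i = l then 1 else 0)" using VmVi_e[of "Suc i" "Suc l"] i l by simp
      finally show "(H_mat \<alpha> n * mat n (n - 1) (\<lambda>(j, l). Vi \<alpha> n $$ (j, Suc l))) $$ (i, l) =
          1\<^sub>m (dim_row (H_mat \<alpha> n)) $$ (i, l)" using i l by (simp add: H_mat_def)
    qed (auto simp: H_mat_def)
  qed (auto simp: H_mat_def)
  have GH: "G_mat \<alpha> n * transpose_mat (H_mat \<alpha> n) = 0\<^sub>m 1 (n - 1)"
  proof (rule eq_matI)
    fix a i assume "a < dim_row (0\<^sub>m 1 (n - 1) :: 'a poly mat)" "i < dim_col (0\<^sub>m 1 (n - 1) :: 'a poly mat)"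
    then have a: "a = 0" and i: "i < n - 1" by auto
    have "(G_mat \<alpha> n * transpose_mat (H_mat \<alpha> n)) $$ (a, i)
        = (\<Sum>j<n. G_mat \<alpha> n $$ (0, j) * H_mat \<alpha> n $$ (i, j))"
      using a i by (simp add: H_mat_def G_mat_def scalar_prod_def atLeast0LessThan)
    also have "\<dots> = (\<Sum>j<n. Polynomial.smult (of_nat n) (Vm \<alpha> n $$ (Suc i, j) * Vi \<alpha> n $$ (j, 0)))"
      using i by (intro sum.cong refl) (simp add: G_Vi[OF nz] HV mult.commute)
    also have "\<dots> = Polynomial.smult (of_nat n) (\<Sum>j<n. Vm \<alpha> n $$ (Suc i, j) * Vi \<alpha> n $$ (j, 0))"
      by (simp add: smult_sum_right)
    also have "\<dots> = 0" using VmVi_e[of "Suc i" 0] i n by simp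
    finally show "(G_mat \<alpha> n * transpose_mat (H_mat \<alpha> n)) $$ (a, i) = 0\<^sub>m 1 (n - 1) $$ (a, i)"
      using a i by simp
  qed (auto simp: G_mat_def H_mat_def)
  have C: "{u \<cdot>\<^sub>m G_mat \<alpha> n | u. True} =
         {v \<in> carrier_mat 1 n. v * transpose_mat (H_mat \<alpha> n) = 0\<^sub>m 1 (n - 1)}"
  proof safe
    fix u show "u \<cdot>\<^sub>m G_mat \<alpha> n \<in> carrier_mat 1 n" by (simp add: G_mat_def)
    have "u \<cdot>\<^sub>m G_mat \<alpha> n * transpose_mat (H_mat \<alpha> n) = u \<cdot>\<^sub>m (G_mat \<alpha> n * transpose_mat (H_mat \<alpha> n))"
      by (rule mult_smult_assoc_mat[where nr=1 and n=n and nc="n-1"]) (auto simp: G_mat_def H_mat_def)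
    then show "u \<cdot>\<^sub>m G_mat \<alpha> n * transpose_mat (H_mat \<alpha> n) = 0\<^sub>m 1 (n - 1)"
      using GH by (auto intro!: eq_matI)
  next
    fix v :: "'a poly mat" assume v: "v \<in> carrier_mat 1 n" and vH: "v * transpose_mat (H_mat \<alpha> n) = 0\<^sub>m 1 (n - 1)"
    define s where "s = (\<Sum>l<n. v $$ (0, l))"
    have vHe: "(\<Sum>l<n. Vm \<alpha> n $$ (i, l) * v $$ (0, l)) = (if i = 0 then s else 0)" if i: "i < n" for i
    proof (cases i)
      case 0
      then show ?thesis by (simp add: Vm_def s_def)
    next
      case (Suc i')
      then have i': "i' < n - 1" using i by simp
      have "(v * transpose_mat (H_mat \<alpha> n)) $$ (0, i') = (\<Sum>l<n. v $$ (0, l) * H_mat \<alpha> n $$ (i', l))"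
        using v i' by (simp add: H_mat_def scalar_prod_def atLeast0LessThan)
      also have "\<dots> = (\<Sum>l<n. Vm \<alpha> n $$ (i, l) * v $$ (0, l))"
        using i' Suc by (intro sum.cong refl) (simp add: HV mult.commute)
      finally show ?thesis using vH i' Suc by simp
    qed
    show "\<exists>u. v = u \<cdot>\<^sub>m G_mat \<alpha> n \<and> True"
    proof (intro exI conjI TrueI eq_matI)
      fix a j assume "a < dim_row (Polynomial.smult (inverse (of_nat n)) s \<cdot>\<^sub>m G_mat \<alpha> n)"
        "j < dim_col (Polynomial.smult (inverse (of_nat n)) s \<cdot>\<^sub>m G_mat \<alpha> n)"
      then have a: "a = 0" and j: "j < n" by (auto simp: G_mat_def)
      have "v $$ (0, j) = (\<Sum>l<n. (if j = l then 1 else 0) * v $$ (0, l))"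
      proof -
        have "(\<Sum>l<n. (if j = l then 1 else 0) * v $$ (0, l)) = (\<Sum>l<n. if j = l then v $$ (0, l) else 0)"
          by (rule sum.cong) auto
        then show ?thesis using j by (simp add: sum.delta)
      qed
      also have "\<dots> = (\<Sum>l<n. (\<Sum>i<n. Vi \<alpha> n $$ (j, i) * Vm \<alpha> n $$ (i, l)) * v $$ (0, l))"
        using j by (intro sum.cong refl) (simp add: ViVm_e)
      also have "\<dots> = (\<Sum>i<n. Vi \<alpha> n $$ (j, i) * (\<Sum>l<n. Vm \<alpha> n $$ (i, l) * v $$ (0, l)))"
        by (simp add: sum_distrib_left sum_distrib_right mult.assoc) (rule sum.swap)
      also have "\<dots> = (\<Sum>i<n. Vi \<alpha> n $$ (j, i) * (if i = 0 then s else 0))"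
        by (intro sum.cong refl) (simp add: vHe)
      also have "\<dots> = Vi \<alpha> n $$ (j, 0) * s" using n by (simp add: if_distrib sum.delta cong: if_cong)
      also have "\<dots> = (Polynomial.smult (inverse (of_nat n)) s \<cdot>\<^sub>m G_mat \<alpha> n) $$ (a, j)"
      proof -
        have d: "dim_row (G_mat \<alpha> n) = 1" "dim_col (G_mat \<alpha> n) = n" by (simp_all add: G_mat_def)
        have "(Polynomial.smult (inverse (of_nat n)) s \<cdot>\<^sub>m G_mat \<alpha> n) $$ (a, j) = Polynomial.smult (inverse (of_nat n)) s * G_mat \<alpha> n $$ (0, j)"
          using a j d by simp
        also have "\<dots> = Polynomial.smult (inverse (of_nat n)) s * Polynomial.smult (of_nat n) (Vi \<alpha> n $$ (j, 0))"
          using G_Vi[OF nz j] by simp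
        also have "\<dots> = Vi \<alpha> n $$ (j, 0) * s" using nz by (simp add: mult.commute)
        finally show ?thesis by simp
      qed
      finally show "v $$ (a, j) = (Polynomial.smult (inverse (of_nat n)) s \<cdot>\<^sub>m G_mat \<alpha> n) $$ (a, j)" using a by simp
    qed (use v in \<open>auto simp: G_mat_def\<close>)
  qed
  show ?thesis using RI GH C by blast
qed
end
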